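(* Let $G_1,\ldots,G_l$ be directed acyclic graphs with pairwise disjoint node sets, $n_i=|V(G_i)|$, $n=\sum_in_i$, where the nodes of each $G_i$ are indexed $1,\ldots,n_i$ according to a topological ordering (so every edge $(a,b)$ of $G_i$ satisfies $a>b$). Let $S$ be a sequence of length $n$ in which each $G_i$ occurs exactly $n_i$ times and no two consecutive entries are equal; identify the $j$th occurrence of $G_i$ in $S$ with the node of $G_i$ of index $j$, and let $T(w)=k$ if the node $w$ is identified with position $k$ of $S$. Let $G$ be the graph with node set $\bigcup_iV(G_i)$ and edge set $\bigcup_iE(G_i)$ together with, for each $k=1,\ldots,n-1$, an edge from the node identified with position $k$ to the node identified with position $k+1$. Let $v$ be the node with $T(v)=1$ and $V_C=\{v\}$. Then the LTI network on $G$ with control node set $V_C$ is strongly structurally controllable.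
   Context: Graphs are directed. A directed acyclic graph has no directed cycles. $\mathcal{Q}(G)=\{A\in\mathbb{R}^{n\times n}:\text{for } i\neq j,\ A_{ij}\neq0\iff(j,i)\in E(G)\}$; for control nodes $V_C=\{j_1,\ldots,j_k\}$ (nodes labeled $1,\ldots,n$), $B=[e_{j_1},\ldots,e_{j_k}]$; the LTI network $\dot x=Ax+Bu$ on $G$ with control nodes $V_C$ is strongly structurally controllable if $(A,B)$ is controllable for every $A\in\mathcal{Q}(G)$. *)

theory Defs
  imports "Jordan_Normal_Form.DL_Rank"
begin

definition kalman_matrix :: "real mat \<Rightarrow> real mat \<Rightarrow> real mat" where
  "kalman_matrix A B = mat_of_cols (dim_row A)
     (concat (map (\<lambda>i. cols ((A ^\<^sub>m i) * B)) [0..<dim_row A]))"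

definition controllable :: "real mat \<Rightarrow> real mat \<Rightarrow> bool" where
  "controllable A B \<longleftrightarrow> vec_space.rank (dim_row A) (kalman_matrix A B) = dim_row A"

definition qual_class :: "nat \<Rightarrow> (nat \<times> nat) set \<Rightarrow> real mat set" where
  "qual_class n E = {A. A \<in> carrier_mat n n \<and>
      (\<forall>i<n. \<forall>j<n. i \<noteq> j \<longrightarrow> (A $$ (i,j) \<noteq> 0 \<longleftrightarrow> (j,i) \<in> E))}"

definition input_matrix :: "nat \<Rightarrow> nat list \<Rightarrow> real mat" where
  "input_matrix n VC = mat_of_cols n (map (\<lambda>j. unit_vec n j) VC)"

definition strongly_structurally_controllable ::
  "nat \<Rightarrow> (nat \<times> nat) set \<Rightarrow> nat list \<Rightarrow> bool" where
  "strongly_structurally_controllable n E VC \<longleftrightarrow>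
     (\<forall>A \<in> qual_class n E. controllable A (input_matrix n VC))"

text \<open>Sequence S (positions 0..<n, entry = index of the graph G_i).
  Local (1-based) index within its graph of the node identified with position k:
  the number of occurrences of S k among positions 0..k.\<close>
definition occ_index :: "(nat \<Rightarrow> nat) \<Rightarrow> nat \<Rightarrow> nat" where
  "occ_index S k = card {k'. k' \<le> k \<and> S k' = S k}"

text \<open>Edges of the combined graph G, with nodes identified with positions 0..<n of S:
  edges of each G_i (in local indices Eg i), plus path edges k -> k+1.\<close>
definition combined_edges ::
  "nat \<Rightarrow> (nat \<Rightarrow> nat) \<Rightarrow> (nat \<Rightarrow> (nat \<times> nat) set) \<Rightarrow> (nat \<times> nat) set" where
  "combined_edges n S Eg =
     {(k, k'). k < n \<and> k' < n \<and> S k = S k' \<and> (occ_index S k, occ_index S k') \<in> Eg (S k)}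
     \<union> {(k, Suc k) | k. Suc k < n}"

end

theory Submission
  imports Defs
begin

lemma pow_mat_Suc_left: "A \<in> carrier_mat n n \<Longrightarrow> A ^\<^sub>m Suc k = A * A ^\<^sub>m k"
proof (induction k)
  case 0 then show ?case by simp
next
  case (Suc k)
  have "A ^\<^sub>m Suc (Suc k) = (A * A ^\<^sub>m k) * A" using Suc by simp
  also have "\<dots> = A * (A ^\<^sub>m k * A)" using Suc.prems by (simp add: assoc_mult_mat[of _ n n _ n _ n])
  finally show ?case by simp
qed

lemma hess_controllable:
  fixes A :: "real mat" and lab :: "nat \<Rightarrow> nat"
  assumes A: "A \<in> carrier_mat n n" and n: "0 < n"
    and bij: "bij_betw lab {0..<n} {0..<n}"
    and zero: "\<And>m p. m < n \<Longrightarrow> p < n \<Longrightarrow> Suc p < m \<Longrightarrow> A $$ (lab m, lab p) = 0"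
    and sub: "\<And>k. Suc k < n \<Longrightarrow> A $$ (lab (Suc k), lab k) \<noteq> 0"
  shows "controllable A (input_matrix n [lab 0])"
proof -
  have labn: "\<And>m. m < n \<Longrightarrow> lab m < n" using bij by (auto simp: bij_betw_def)
  define e :: "real vec" where "e = unit_vec n (lab 0)"
  define w where "w k = (A ^\<^sub>m k) *\<^sub>v e" for k
  have e: "e \<in> carrier_vec n" by (simp add: e_def)
  have wc: "w k \<in> carrier_vec n" for k using mult_mat_vec_carrier[OF pow_carrier_mat[OF A] e] by (simp add: w_def)
  have wS: "w (Suc k) = A *\<^sub>v w k" for k
    unfolding w_def using pow_mat_Suc_left[OF A, of k] assoc_mult_mat_vec[OF A pow_carrier_mat[OF A, of k] e] by simp
  have reidx: "(\<Sum>j\<in>{0..<n}. g j) = (\<Sum>p\<in>{0..<n}. g (lab p))" for g :: "nat \<Rightarrow> real"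
    using sum.reindex_bij_betw[OF bij, of g] by simp
  have wS': "w (Suc k) $ lab m = (\<Sum>p\<in>{0..<n}. A $$ (lab m, lab p) * w k $ lab p)" if "m < n" for k m
  proof -
    have "w (Suc k) $ lab m = (\<Sum>j\<in>{0..<n}. A $$ (lab m, j) * w k $ j)"
      using wS A wc[of k] labn[OF that] by (auto simp: scalar_prod_def intro!: sum.cong)
    then show ?thesis using reidx by simp
  qed
  have P: "k < n \<Longrightarrow> (\<forall>m<n. k < m \<longrightarrow> w k $ lab m = 0) \<and> w k $ lab k \<noteq> 0" for k
  proof (induction k)
    case 0
    have inj: "inj_on lab {0..<n}" using bij by (auto simp: bij_betw_def)
    show ?case
    proof (intro conjI allI impI)
      fix m assume "m < n" "0 < m"
      then have "lab m \<noteq> lab 0" using inj n unfolding inj_on_def by (metis atLeastLessThan_iff le0 less_not_refl)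
      then show "w 0 $ lab m = 0" using A labn \<open>m < n\<close> by (simp add: w_def e_def)
    next
      show "w 0 $ lab 0 \<noteq> 0" using A labn n by (simp add: w_def e_def)
    qed
  next
    case (Suc k)
    then have IH: "\<forall>m<n. k < m \<longrightarrow> w k $ lab m = 0" "w k $ lab k \<noteq> 0" by auto
    show ?case
    proof (intro conjI allI impI)
      fix m assume m: "m < n" "Suc k < m"
      have "(\<Sum>p\<in>{0..<n}. A $$ (lab m, lab p) * w k $ lab p) = 0"
      proof (rule sum.neutral, intro ballI)
        fix p assume p: "p \<in> {0..<n}"
        show "A $$ (lab m, lab p) * w k $ lab p = 0"
        proof (cases "k < p")
          case True then show ?thesis using IH p by simp
        next
          case False then show ?thesis using zero[of m p] m p by simp
        qed
      qed
      then show "w (Suc k) $ lab m = 0" using wS' m by simp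
    next
      have m: "Suc k < n" by fact
      have "(\<Sum>p\<in>{0..<n}. A $$ (lab (Suc k), lab p) * w k $ lab p)
          = A $$ (lab (Suc k), lab k) * w k $ lab k + (\<Sum>p\<in>{0..<n}-{k}. A $$ (lab (Suc k), lab p) * w k $ lab p)"
        using m by (subst sum.remove[of _ k]) auto
      also have "(\<Sum>p\<in>{0..<n}-{k}. A $$ (lab (Suc k), lab p) * w k $ lab p) = 0"
      proof (rule sum.neutral, intro ballI)
        fix p assume p: "p \<in> {0..<n}-{k}"
        show "A $$ (lab (Suc k), lab p) * w k $ lab p = 0"
        proof (cases "k < p")
          case True then show ?thesis using IH p by simp
        next
          case False then show ?thesis using zero[of "Suc k" p] m p by simp
        qed
      qed
      finally have "(\<Sum>p\<in>{0..<n}. A $$ (lab (Suc k), lab p) * w k $ lab p) = A $$ (lab (Suc k), lab k) * w k $ lab k" by simp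
      then show "w (Suc k) $ lab (Suc k) \<noteq> 0" using wS'[OF m] IH sub[OF m] by simp
    qed
  qed
  define K where "K = kalman_matrix A (input_matrix n [lab 0])"
  have B: "input_matrix n [lab 0] \<in> carrier_mat n 1" unfolding input_matrix_def using mat_of_cols_carrier(1)[of n "[unit_vec n (lab 0)]"] by simp
  have colsk: "cols ((A ^\<^sub>m i) * input_matrix n [lab 0]) = [w i]" for i
  proof -
    have c: "(A ^\<^sub>m i) * input_matrix n [lab 0] \<in> carrier_mat n 1" using A B by auto
    have "col (input_matrix n [lab 0]) 0 = e" by (simp add: input_matrix_def e_def)
    then have "col ((A ^\<^sub>m i) * input_matrix n [lab 0]) 0 = w i"
      using col_mult2[OF pow_carrier_mat[OF A] B, of 0] by (simp add: w_def)
    then show ?thesis using c by (intro nth_equalityI) auto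
  qed
  have hconc: "concat (map (\<lambda>i. cols ((A ^\<^sub>m i) * input_matrix n [lab 0])) [0..<n]) = map w [0..<n]"
    unfolding colsk by (induction n) auto
  have Kdef: "K = mat_of_cols n (map w [0..<n])"
    unfolding K_def kalman_matrix_def using A hconc by simp
  have Kc: "K \<in> carrier_mat n n" unfolding Kdef by (metis length_map length_upt minus_nat.diff_0 mat_of_cols_carrier(1))
  have Kent: "K $$ (i, j) = w j $ i" if "i < n" "j < n" for i j
    unfolding Kdef using that by (simp add: mat_of_cols_index)
  have "det K \<noteq> 0"
  proof
    assume "det K = 0"
    then obtain v where v: "v \<in> carrier_vec n" "v \<noteq> 0\<^sub>v n" "K *\<^sub>v v = 0\<^sub>v n"
      using det_0_iff_vec_prod_zero_field[OF Kc] by auto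
    have "\<exists>j<n. v $ j \<noteq> 0" using v(1,2) by (metis eq_vecI carrier_vecD index_zero_vec(1) index_zero_vec(2))
    define k where "k = Max {j. j < n \<and> v $ j \<noteq> 0}"
    have fin: "finite {j. j < n \<and> v $ j \<noteq> 0}" by simp
    have kin: "k < n \<and> v $ k \<noteq> 0" unfolding k_def using Max_in[OF fin] \<open>\<exists>j<n. v $ j \<noteq> 0\<close> by auto
    have kmax: "\<And>j. j < n \<Longrightarrow> k < j \<Longrightarrow> v $ j = 0"
      using Max_ge[OF fin] unfolding k_def[symmetric] by fastforce
    have "(K *\<^sub>v v) $ lab k = (\<Sum>j\<in>{0..<n}. w j $ lab k * v $ j)"
      using Kc v(1) labn kin Kent by (auto simp: scalar_prod_def intro!: sum.cong)
    also have "\<dots> = w k $ lab k * v $ k + (\<Sum>j\<in>{0..<n}-{k}. w j $ lab k * v $ j)"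
      using kin by (subst sum.remove[of _ k]) auto
    also have "(\<Sum>j\<in>{0..<n}-{k}. w j $ lab k * v $ j) = 0"
    proof (rule sum.neutral, intro ballI)
      fix j assume j: "j \<in> {0..<n}-{k}"
      show "w j $ lab k * v $ j = 0"
      proof (cases "k < j")
        case True then show ?thesis using kmax j by simp
      next
        case False then show ?thesis using P[of j] j kin by auto
      qed
    qed
    finally have "(K *\<^sub>v v) $ lab k \<noteq> 0" using P[of k] kin by simp
    then show False using v(3) labn kin by simp
  qed
  then have "vec_space.rank n K = n" using vec_space.det_rank_iff[OF Kc] by simp
  then show ?thesis unfolding controllable_def K_def using A by simp
qed

lemma occ_mono: "p \<le> m \<Longrightarrow> S p = S m \<Longrightarrow> occ_index S p \<le> occ_index S m"
  unfolding occ_index_def by (rule card_mono) auto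

theorem proposition4:
  fixes l n :: nat
    and S :: "nat \<Rightarrow> nat"
    and Eg :: "nat \<Rightarrow> (nat \<times> nat) set"
    and lab :: "nat \<Rightarrow> nat"
  assumes "0 < n"
    and "\<forall>k<n. S k < l"
    and "\<forall>i<l. \<exists>k<n. S k = i"
    and "\<forall>k. Suc k < n \<longrightarrow> S k \<noteq> S (Suc k)"
    and "\<forall>i<l. Eg i \<subseteq> {1..card {k. k < n \<and> S k = i}} \<times> {1..card {k. k < n \<and> S k = i}}"
    and "\<forall>i<l. \<forall>(a, b) \<in> Eg i. a > b"
    and "bij_betw lab {0..<n} {0..<n}"
  shows "strongly_structurally_controllable n
           ((\<lambda>(k, k'). (lab k, lab k')) ` combined_edges n S Eg) [lab 0]"
proof -
  let ?E = "(\<lambda>(k, k'). (lab k, lab k')) ` combined_edges n S Eg"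
  have inj: "inj_on lab {0..<n}" using assms(7) by (auto simp: bij_betw_def)
  have labn: "\<And>m. m < n \<Longrightarrow> lab m < n" using assms(7) by (auto simp: bij_betw_def)
  have F1: "m < p \<or> m = Suc p" if "(p, m) \<in> combined_edges n S Eg" for p m
  proof (cases "m = Suc p")
    case False
    then have c: "p < n" "m < n" "S p = S m" "(occ_index S p, occ_index S m) \<in> Eg (S p)"
      using that unfolding combined_edges_def by auto
    then have "occ_index S p > occ_index S m" using assms(2,6) by fastforce
    then show ?thesis using occ_mono[of p m S] c(3) by (metis leI not_le)
  qed simp
  have inE: "(p, m) \<in> combined_edges n S Eg" if hE: "(lab p, lab m) \<in> ?E" and pm: "p < n" "m < n" for p m
  proof -
    obtain pr where pr: "pr \<in> combined_edges n S Eg" "(lab p, lab m) = (\<lambda>(k, k'). (lab k, lab k')) pr"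
      using hE by blast
    obtain x y where "pr = (x, y)" by fastforce
    then have xy: "(x, y) \<in> combined_edges n S Eg" "lab x = lab p" "lab y = lab m" using pr by auto
    have "x < n" "y < n" using xy(1) unfolding combined_edges_def by auto
    then have "x = p" "y = m" using xy inj pm unfolding inj_on_def by auto
    then show ?thesis using xy(1) by simp
  qed
  show ?thesis unfolding strongly_structurally_controllable_def
  proof
    fix A assume A: "A \<in> qual_class n ?E"
    have Ac: "A \<in> carrier_mat n n" using A by (simp add: qual_class_def)
    have Q: "\<And>i j. i < n \<Longrightarrow> j < n \<Longrightarrow> i \<noteq> j \<Longrightarrow> (A $$ (i,j) \<noteq> 0 \<longleftrightarrow> (j,i) \<in> ?E)"
      using A by (simp add: qual_class_def)
    show "controllable A (input_matrix n [lab 0])"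
    proof (rule hess_controllable[OF Ac assms(1) assms(7)])
      fix m p assume mp: "m < n" "p < n" "Suc p < m"
      have ne: "lab m \<noteq> lab p" using inj mp unfolding inj_on_def by (metis atLeastLessThan_iff le0 Suc_lessD less_not_refl)
      show "A $$ (lab m, lab p) = 0"
      proof (rule ccontr)
        assume "A $$ (lab m, lab p) \<noteq> 0"
        then have "(lab p, lab m) \<in> ?E" using Q[OF labn labn ne] mp by blast
        then have "(p, m) \<in> combined_edges n S Eg" using inE mp by blast
        then show False using F1 mp by fastforce
      qed
    next
      fix k assume k: "Suc k < n"
      have ne: "lab (Suc k) \<noteq> lab k" using inj k unfolding inj_on_def by (metis atLeastLessThan_iff le0 Suc_lessD n_not_Suc_n)
      have "(k, Suc k) \<in> combined_edges n S Eg" using k unfolding combined_edges_def by auto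
      then have "(lab k, lab (Suc k)) \<in> ?E" by force
      then show "A $$ (lab (Suc k), lab k) \<noteq> 0" using Q[OF labn labn ne] k by auto
    qed
  qed
qed

end
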